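(* For a random subcomplex $X$ of $\triangle_n$ the following are equivalent: (1) $X$ is spatially independent; (2) for all $Y_1,Y_2\in S_n$ with $\mathbb{P}(Y_2\subset X)>0$, $\mathbb{P}(Y_1\subset X\mid Y_2\subset X)=\mathbb{P}(Y_1\subset X\mid Y_1\cap Y_2\subset X)$; (3) for all $Y_1,Y_2\in S_n$ with $\mathbb{P}(Y_1\cap Y_2\subset X)>0$, $\mathbb{P}(Y_1\cup Y_2\subset X\mid Y_1\cap Y_2\subset X)=\mathbb{P}(Y_1\subset X\mid Y_1\cap Y_2\subset X)\,\mathbb{P}(Y_2\subset X\mid Y_1\cap Y_2\subset X)$; (4) for all $Y_1,Y_2,Z\in S_n$ with $Y_1\cap Y_2\subset Z$ and $\mathbb{P}(Z\subset X)>0$, $\mathbb{P}(Y_1\cup Y_2\subset X\mid Z\subset X)=\mathbb{P}(Y_1\subset X\mid Z\subset X)\,\mathbb{P}(Y_2\subset X\mid Z\subset X)$.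
   Context: $\triangle_n=2^{[n]}$; $S_n$ is the set of subcomplexes of $\triangle_n$ (families of subsets of $[n]$ closed under taking subsets); a random subcomplex is an $S_n$-valued random variable. $X$ is spatially independent if $\mathbb{P}(Y_1\cup Y_2\subset X)\,\mathbb{P}(Y_1\cap Y_2\subset X)=\mathbb{P}(Y_1\subset X)\,\mathbb{P}(Y_2\subset X)$ for all $Y_1,Y_2\in S_n$. *)

theory Defs
  imports "HOL-Probability.Probability"
begin

definition full_simplex :: "nat \<Rightarrow> nat set set" where
  "full_simplex n = Pow {1..n}"

definition subcomplexes :: "nat \<Rightarrow> nat set set set" where
  "subcomplexes n = {K. K \<subseteq> full_simplex n \<and> (\<forall>\<sigma>\<in>K. \<forall>\<tau>. \<tau> \<subseteq> \<sigma> \<longrightarrow> \<tau> \<in> K)}"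

text \<open>A random subcomplex of the n-simplex: a probability distribution on S_n
  (S_n is finite, so every distribution is a pmf).\<close>
definition random_subcomplex :: "nat \<Rightarrow> nat set set pmf \<Rightarrow> bool" where
  "random_subcomplex n X \<longleftrightarrow> set_pmf X \<subseteq> subcomplexes n"

definition contains_ev :: "nat set set \<Rightarrow> nat set set set" where
  "contains_ev Y = {K. Y \<subseteq> K}"

definition Pc :: "nat set set pmf \<Rightarrow> nat set set \<Rightarrow> real" where
  "Pc X Y = measure_pmf.prob X (contains_ev Y)"

definition Pcond :: "nat set set pmf \<Rightarrow> nat set set \<Rightarrow> nat set set \<Rightarrow> real" where
  "Pcond X Y Z = measure_pmf.prob X (contains_ev Y \<inter> contains_ev Z) / Pc X Z"

definition spatially_independent :: "nat \<Rightarrow> nat set set pmf \<Rightarrow> bool" where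
  "spatially_independent n X \<longleftrightarrow>
     (\<forall>Y1\<in>subcomplexes n. \<forall>Y2\<in>subcomplexes n.
        Pc X (Y1 \<union> Y2) * Pc X (Y1 \<inter> Y2) = Pc X Y1 * Pc X Y2)"

end

theory Submission
  imports Defs
begin

lemma key3: "(d::real) > 0 \<Longrightarrow> (a/d = (b/d)*(c/d)) \<longleftrightarrow> a*d = b*c"
proof -
  assume d: "(d::real) > 0"
  have "(b/d)*(c/d) = (b*c)/(d*d)" by simp
  also have "... = ((b*c)/d)/d" by simp
  finally have e: "(b/d)*(c/d) = ((b*c)/d)/d" .
  have "(a/d = ((b*c)/d)/d) \<longleftrightarrow> a = (b*c)/d" using d by (simp only: divide_cancel_right) simp
  also have "... \<longleftrightarrow> a*d = b*c" using d by (simp add: eq_divide_eq)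
  finally show ?thesis using e by simp
qed
lemma key2: "(b::real) > 0 \<Longrightarrow> d > 0 \<Longrightarrow> (a/b = c/d) \<longleftrightarrow> a*d = c*b"
  by (simp add: frac_eq_eq)

lemma Pcond_eq: "Pcond X Y Z = Pc X (Y \<union> Z) / Pc X Z"
proof -
  have "contains_ev Y \<inter> contains_ev Z = contains_ev (Y \<union> Z)"
    unfolding contains_ev_def by auto
  thus ?thesis unfolding Pcond_def Pc_def by simp
qed

lemma Pc_mono: "A \<subseteq> B \<Longrightarrow> Pc X B \<le> Pc X A"
  unfolding Pc_def contains_ev_def
  by (rule measure_pmf.finite_measure_mono) auto

lemma Pc_nonneg: "0 \<le> Pc X A"
  unfolding Pc_def by simp

lemma sub_Un: "A \<in> subcomplexes n \<Longrightarrow> B \<in> subcomplexes n \<Longrightarrow> A \<union> B \<in> subcomplexes n"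
  unfolding subcomplexes_def mem_Collect_eq
proof -
  assume a: "A \<subseteq> full_simplex n \<and> (\<forall>\<sigma>\<in>A. \<forall>\<tau>. \<tau> \<subseteq> \<sigma> \<longrightarrow> \<tau> \<in> A)"
     and b: "B \<subseteq> full_simplex n \<and> (\<forall>\<sigma>\<in>B. \<forall>\<tau>. \<tau> \<subseteq> \<sigma> \<longrightarrow> \<tau> \<in> B)"
  show "A \<union> B \<subseteq> full_simplex n \<and> (\<forall>\<sigma>\<in>A \<union> B. \<forall>\<tau>. \<tau> \<subseteq> \<sigma> \<longrightarrow> \<tau> \<in> A \<union> B)"
  proof
    show "A \<union> B \<subseteq> full_simplex n" using a b by (simp only: Un_subset_iff)
    show "\<forall>\<sigma>\<in>A \<union> B. \<forall>\<tau>. \<tau> \<subseteq> \<sigma> \<longrightarrow> \<tau> \<in> A \<union> B"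
    proof (intro ballI allI impI)
      fix \<sigma> \<tau> assume s: "\<sigma> \<in> A \<union> B" and t: "\<tau> \<subseteq> \<sigma>"
      show "\<tau> \<in> A \<union> B"
      proof (cases "\<sigma> \<in> A")
        case True then have "\<tau> \<in> A" using a t by (elim conjE) (drule bspec, assumption, iprover)
        then show ?thesis by (rule UnI1)
      next
        case False then have "\<sigma> \<in> B" using s by (simp only: Un_iff) iprover
        then have "\<tau> \<in> B" using b t by (elim conjE) (drule bspec, assumption, iprover)
        then show ?thesis by (rule UnI2)
      qed
    qed
  qed
qed

lemma sub_Int: "A \<in> subcomplexes n \<Longrightarrow> B \<in> subcomplexes n \<Longrightarrow> A \<inter> B \<in> subcomplexes n"
  unfolding subcomplexes_def mem_Collect_eq
proof -
  assume a: "A \<subseteq> full_simplex n \<and> (\<forall>\<sigma>\<in>A. \<forall>\<tau>. \<tau> \<subseteq> \<sigma> \<longrightarrow> \<tau> \<in> A)"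
     and b: "B \<subseteq> full_simplex n \<and> (\<forall>\<sigma>\<in>B. \<forall>\<tau>. \<tau> \<subseteq> \<sigma> \<longrightarrow> \<tau> \<in> B)"
  show "A \<inter> B \<subseteq> full_simplex n \<and> (\<forall>\<sigma>\<in>A \<inter> B. \<forall>\<tau>. \<tau> \<subseteq> \<sigma> \<longrightarrow> \<tau> \<in> A \<inter> B)"
  proof
    show "A \<inter> B \<subseteq> full_simplex n" using a by (elim conjE) (rule Int_lower1[THEN subset_trans])
    show "\<forall>\<sigma>\<in>A \<inter> B. \<forall>\<tau>. \<tau> \<subseteq> \<sigma> \<longrightarrow> \<tau> \<in> A \<inter> B"
    proof (intro ballI allI impI)
      fix \<sigma> \<tau> assume s: "\<sigma> \<in> A \<inter> B" and t: "\<tau> \<subseteq> \<sigma>"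
      from s have sA: "\<sigma> \<in> A" and sB: "\<sigma> \<in> B" by (rule IntD1, rule IntD2)
      have "\<tau> \<in> A" using a sA t by (elim conjE) (drule bspec, assumption, iprover)
      moreover have "\<tau> \<in> B" using b sB t by (elim conjE) (drule bspec, assumption, iprover)
      ultimately show "\<tau> \<in> A \<inter> B" by (rule IntI)
    qed
  qed
qed

lemma eq2: "Pc X Y2 > 0 \<Longrightarrow>
   (Pcond X Y1 Y2 = Pcond X Y1 (Y1 \<inter> Y2)) \<longleftrightarrow>
   Pc X (Y1 \<union> Y2) * Pc X (Y1 \<inter> Y2) = Pc X Y1 * Pc X Y2"
proof -
  assume h: "Pc X Y2 > 0"
  have "Pc X Y2 \<le> Pc X (Y1 \<inter> Y2)" by (rule Pc_mono) auto
  with h have h2: "Pc X (Y1 \<inter> Y2) > 0" by linarith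
  have e: "Y1 \<union> (Y1 \<inter> Y2) = Y1" by auto
  show ?thesis unfolding Pcond_eq e by (rule key2[OF h h2])
qed

lemma zero2: "Pc X Y2 = 0 \<Longrightarrow> Pc X (Y1 \<union> Y2) * Pc X (Y1 \<inter> Y2) = Pc X Y1 * Pc X Y2"
proof -
  assume h: "Pc X Y2 = 0"
  have "Pc X (Y1 \<union> Y2) \<le> Pc X Y2" by (rule Pc_mono) auto
  with h Pc_nonneg[of X "Y1 \<union> Y2"] have "Pc X (Y1 \<union> Y2) = 0" by linarith
  with h show ?thesis by simp
qed

lemma eq3: "Pc X (Y1 \<inter> Y2) > 0 \<Longrightarrow>
   (Pcond X (Y1 \<union> Y2) (Y1 \<inter> Y2) = Pcond X Y1 (Y1 \<inter> Y2) * Pcond X Y2 (Y1 \<inter> Y2)) \<longleftrightarrow>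
   Pc X (Y1 \<union> Y2) * Pc X (Y1 \<inter> Y2) = Pc X Y1 * Pc X Y2"
proof -
  assume h: "Pc X (Y1 \<inter> Y2) > 0"
  have e: "Y1 \<union> (Y1 \<inter> Y2) = Y1" "Y2 \<union> (Y1 \<inter> Y2) = Y2" "(Y1 \<union> Y2) \<union> (Y1 \<inter> Y2) = Y1 \<union> Y2" by auto
  show ?thesis unfolding Pcond_eq e by (rule key3[OF h])
qed

lemma zero3: "Pc X (Y1 \<inter> Y2) = 0 \<Longrightarrow> Pc X (Y1 \<union> Y2) * Pc X (Y1 \<inter> Y2) = Pc X Y1 * Pc X Y2"
proof -
  assume h: "Pc X (Y1 \<inter> Y2) = 0"
  have "Pc X Y1 \<le> Pc X (Y1 \<inter> Y2)" by (rule Pc_mono) auto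
  with h Pc_nonneg[of X Y1] have "Pc X Y1 = 0" by linarith
  with h show ?thesis by simp
qed

lemma si_iff: "spatially_independent n X \<longleftrightarrow>
   (\<forall>Y1\<in>subcomplexes n. \<forall>Y2\<in>subcomplexes n. Pc X Y2 > 0 \<longrightarrow>
        Pc X (Y1 \<union> Y2) * Pc X (Y1 \<inter> Y2) = Pc X Y1 * Pc X Y2)"
  unfolding spatially_independent_def
proof (intro iffI ballI impI)
  fix Y1 Y2 assume h: "\<forall>Y1\<in>subcomplexes n. \<forall>Y2\<in>subcomplexes n. Pc X Y2 > 0 \<longrightarrow>
        Pc X (Y1 \<union> Y2) * Pc X (Y1 \<inter> Y2) = Pc X Y1 * Pc X Y2"
    and a: "Y1 \<in> subcomplexes n" "Y2 \<in> subcomplexes n"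
  show "Pc X (Y1 \<union> Y2) * Pc X (Y1 \<inter> Y2) = Pc X Y1 * Pc X Y2"
  proof (cases "Pc X Y2 = 0")
    case True thus ?thesis by (rule zero2)
  next
    case False with Pc_nonneg[of X "Y2"] have "Pc X Y2 > 0" by linarith
    with h a show ?thesis by blast
  qed
qed blast

lemma si_iff3: "spatially_independent n X \<longleftrightarrow>
   (\<forall>Y1\<in>subcomplexes n. \<forall>Y2\<in>subcomplexes n. Pc X (Y1 \<inter> Y2) > 0 \<longrightarrow>
        Pc X (Y1 \<union> Y2) * Pc X (Y1 \<inter> Y2) = Pc X Y1 * Pc X Y2)"
  unfolding spatially_independent_def
proof (intro iffI ballI impI)
  fix Y1 Y2 assume h: "\<forall>Y1\<in>subcomplexes n. \<forall>Y2\<in>subcomplexes n. Pc X (Y1 \<inter> Y2) > 0 \<longrightarrow>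
        Pc X (Y1 \<union> Y2) * Pc X (Y1 \<inter> Y2) = Pc X Y1 * Pc X Y2"
    and a: "Y1 \<in> subcomplexes n" "Y2 \<in> subcomplexes n"
  show "Pc X (Y1 \<union> Y2) * Pc X (Y1 \<inter> Y2) = Pc X Y1 * Pc X Y2"
  proof (cases "Pc X (Y1 \<inter> Y2) = 0")
    case True thus ?thesis by (rule zero3)
  next
    case False with Pc_nonneg[of X "(Y1 \<inter> Y2)"] have "Pc X (Y1 \<inter> Y2) > 0" by linarith
    with h a show ?thesis by blast
  qed
qed blast

lemma four_imp: assumes "spatially_independent n X"
  and "Y1 \<in> subcomplexes n" "Y2 \<in> subcomplexes n" "Z \<in> subcomplexes n"
  and "Y1 \<inter> Y2 \<subseteq> Z" "Pc X Z > 0"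
  shows "Pcond X (Y1 \<union> Y2) Z = Pcond X Y1 Z * Pcond X Y2 Z"
proof -
  have A: "Y1 \<union> Z \<in> subcomplexes n" "Y2 \<union> Z \<in> subcomplexes n"
    using assms sub_Un by auto
  have "Pc X ((Y1 \<union> Z) \<union> (Y2 \<union> Z)) * Pc X ((Y1 \<union> Z) \<inter> (Y2 \<union> Z)) = Pc X (Y1 \<union> Z) * Pc X (Y2 \<union> Z)"
    using assms(1) A unfolding spatially_independent_def by blast
  moreover have "(Y1 \<union> Z) \<union> (Y2 \<union> Z) = Y1 \<union> Y2 \<union> Z" "(Y1 \<union> Z) \<inter> (Y2 \<union> Z) = Z"
    using assms(5) by auto
  ultimately have "Pc X (Y1 \<union> Y2 \<union> Z) * Pc X Z = Pc X (Y1 \<union> Z) * Pc X (Y2 \<union> Z)" by simp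
  then show ?thesis unfolding Pcond_eq by (rule key3[OF assms(6), THEN iffD2])
qed

theorem lemma3p1:
  fixes n :: nat and X :: "nat set set pmf"
  assumes "random_subcomplex n X"
  shows "(spatially_independent n X \<longleftrightarrow>
            (\<forall>Y1\<in>subcomplexes n. \<forall>Y2\<in>subcomplexes n. Pc X Y2 > 0 \<longrightarrow>
               Pcond X Y1 Y2 = Pcond X Y1 (Y1 \<inter> Y2)))
       \<and> (spatially_independent n X \<longleftrightarrow>
            (\<forall>Y1\<in>subcomplexes n. \<forall>Y2\<in>subcomplexes n. Pc X (Y1 \<inter> Y2) > 0 \<longrightarrow>
               Pcond X (Y1 \<union> Y2) (Y1 \<inter> Y2) = Pcond X Y1 (Y1 \<inter> Y2) * Pcond X Y2 (Y1 \<inter> Y2)))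
       \<and> (spatially_independent n X \<longleftrightarrow>
            (\<forall>Y1\<in>subcomplexes n. \<forall>Y2\<in>subcomplexes n. \<forall>Z\<in>subcomplexes n.
               Y1 \<inter> Y2 \<subseteq> Z \<longrightarrow> Pc X Z > 0 \<longrightarrow>
               Pcond X (Y1 \<union> Y2) Z = Pcond X Y1 Z * Pcond X Y2 Z))"
proof (intro conjI)
  show "spatially_independent n X \<longleftrightarrow>
            (\<forall>Y1\<in>subcomplexes n. \<forall>Y2\<in>subcomplexes n. Pc X Y2 > 0 \<longrightarrow>
               Pcond X Y1 Y2 = Pcond X Y1 (Y1 \<inter> Y2))"
    unfolding si_iff using eq2 by blast
  have 3: "spatially_independent n X \<longleftrightarrow>
            (\<forall>Y1\<in>subcomplexes n. \<forall>Y2\<in>subcomplexes n. Pc X (Y1 \<inter> Y2) > 0 \<longrightarrow>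
               Pcond X (Y1 \<union> Y2) (Y1 \<inter> Y2) = Pcond X Y1 (Y1 \<inter> Y2) * Pcond X Y2 (Y1 \<inter> Y2))"
    unfolding si_iff3 using eq3 by blast
  show "spatially_independent n X \<longleftrightarrow>
            (\<forall>Y1\<in>subcomplexes n. \<forall>Y2\<in>subcomplexes n. Pc X (Y1 \<inter> Y2) > 0 \<longrightarrow>
               Pcond X (Y1 \<union> Y2) (Y1 \<inter> Y2) = Pcond X Y1 (Y1 \<inter> Y2) * Pcond X Y2 (Y1 \<inter> Y2))"
    by (rule 3)
  show "spatially_independent n X \<longleftrightarrow>
            (\<forall>Y1\<in>subcomplexes n. \<forall>Y2\<in>subcomplexes n. \<forall>Z\<in>subcomplexes n.
               Y1 \<inter> Y2 \<subseteq> Z \<longrightarrow> Pc X Z > 0 \<longrightarrow>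
               Pcond X (Y1 \<union> Y2) Z = Pcond X Y1 Z * Pcond X Y2 Z)"
  proof
    assume "spatially_independent n X"
    thus "\<forall>Y1\<in>subcomplexes n. \<forall>Y2\<in>subcomplexes n. \<forall>Z\<in>subcomplexes n.
               Y1 \<inter> Y2 \<subseteq> Z \<longrightarrow> Pc X Z > 0 \<longrightarrow>
               Pcond X (Y1 \<union> Y2) Z = Pcond X Y1 Z * Pcond X Y2 Z"
      using four_imp by blast
  next
    assume h: "\<forall>Y1\<in>subcomplexes n. \<forall>Y2\<in>subcomplexes n. \<forall>Z\<in>subcomplexes n.
               Y1 \<inter> Y2 \<subseteq> Z \<longrightarrow> Pc X Z > 0 \<longrightarrow>
               Pcond X (Y1 \<union> Y2) Z = Pcond X Y1 Z * Pcond X Y2 Z"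
    show "spatially_independent n X"
      unfolding 3 using h sub_Int by blast
  qed
qed

end
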